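(* Let $k=2^{\ell}$ for an integer $\ell\ge 2$ and let $q=4k$. Let $a,b\in\mathfrak S_q$ be the permutations $$a=(c_0,c_1)(c_2,c_3)\cdots(c_{4k-2},c_{4k-1}),$$ and $b=C_1C_2$, where $C_1$ and $C_2$ are the following two disjoint $2k$-cycles: - $C_1$ is the cycle whose entries, in order, are: for $m=0,1,\dots,\frac{k-2}{2}$ successively the pair $c_{2m},\,c_{2(2m+k-1)}$; then for $n=0,1,\dots,\frac{k-4}{2}$ successively the pair $c_{2n+k},\,c_{2(2n+k)}$; and finally $c_{4k-1},\,c_{4k-4}$. That is, $C_1=(c_0,c_{2k-2},c_2,c_{2k+2},\dots,c_{k-2},c_{4k-6},c_k,c_{2k},c_{k+2},c_{2k+4},\dots,c_{2k-4},c_{4k-8},c_{4k-1},c_{4k-4})$. - $C_2$ is the cycle whose entries, in order, are: for $m=0,1,\dots,\frac{k-2}{2}$ successively the pair $c_{2m+1},\,c_{2(2m+k)+1}$; then for $n=0,1,\dots,\frac{k-4}{2}$ successively the pair $c_{2n+k+1},\,c_{2(2n+k)-1}$; and finally $c_{4k-2},\,c_{4k-5}$. That is, $C_2=(c_1,c_{2k+1},c_3,c_{2k+5},\dots,c_{k-1},c_{4k-3},c_{k+1},c_{2k-1},c_{k+3},c_{2k+3},\dots,c_{2k-3},c_{4k-9},c_{4k-2},c_{4k-5})$. Then $G_1=\{b^{j}a^{i}: 0\le j\le 2k-1,\ 0\le i\le 1\}$ is a subgroup of $\mathfrak S_q$ with $|G_1|=q$, and no element of $G_1$ other than the identity has a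 fixed point.
   Context: $q$ is a prime power and the elements of the finite field $\mathbb F_q$ are enumerated once and for all as $\mathbb F_q=\{c_0,c_1,\dots,c_{q-1}\}$. $\mathfrak S_q$ denotes the symmetric group of all permutations of $\mathbb F_q$; products of permutations are compositions applied right to left, $(\sigma\tau)(x)=\sigma(\tau(x))$, and permutations are written in cycle notation. *)

theory Defs
  imports "HOL-Algebra.Group" "HOL-Combinatorics.Cycles"
begin

definition perm_group :: "'a set \<Rightarrow> ('a \<Rightarrow> 'a) monoid" where
  "perm_group F = \<lparr>carrier = {p. p permutes F}, monoid.mult = (\<circ>), one = id\<rparr>"

definition C1_idx :: "nat \<Rightarrow> nat list" where
  "C1_idx k = concat (map (\<lambda>m. [2*m, 2*(2*m+k-1)]) [0..<(k-2) div 2 + 1])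
            @ concat (map (\<lambda>n. [2*n+k, 2*(2*n+k)]) [0..<(k-4) div 2 + 1])
            @ [4*k-1, 4*k-4]"

definition C2_idx :: "nat \<Rightarrow> nat list" where
  "C2_idx k = concat (map (\<lambda>m. [2*m+1, 2*(2*m+k)+1]) [0..<(k-2) div 2 + 1])
            @ concat (map (\<lambda>n. [2*n+k+1, 2*(2*n+k)-1]) [0..<(k-4) div 2 + 1])
            @ [4*k-2, 4*k-5]"

definition perm_a :: "(nat \<Rightarrow> 'a) \<Rightarrow> nat \<Rightarrow> 'a \<Rightarrow> 'a" where
  "perm_a c k = foldr (\<circ>) (map (\<lambda>i. cycle_of_list [c (2*i), c (2*i+1)]) [0..<2*k]) id"

definition perm_b :: "(nat \<Rightarrow> 'a) \<Rightarrow> nat \<Rightarrow> 'a \<Rightarrow> 'a" where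
  "perm_b c k = cycle_of_list (map c (C1_idx k)) \<circ> cycle_of_list (map c (C2_idx k))"

definition G1 :: "(nat \<Rightarrow> 'a) \<Rightarrow> nat \<Rightarrow> ('a \<Rightarrow> 'a) set" where
  "G1 c k = {(perm_b c k ^^ j) \<circ> (perm_a c k ^^ i) | j i. j \<le> 2*k-1 \<and> i \<le> 1}"

end

theory Submission
  imports Defs
begin

definition e1 :: "nat \<Rightarrow> nat \<Rightarrow> nat" where
  "e1 g p = (let r = p div 2 in if even p then (if r < 4*g+3 then 2*r else 16*g+15)
     else if r < 2*g+2 then 4*r+8*g+6 else if r < 4*g+3 then 4*r else 16*g+12)"
definition e2 :: "nat \<Rightarrow> nat \<Rightarrow> nat" where
  "e2 g p = (let r = p div 2 in if even p then (if r < 4*g+3 then 2*r+1 else 16*g+14)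
     else if r < 2*g+2 then 4*r+8*g+9 else if r < 4*g+3 then 4*r-1 else 16*g+11)"
definition alp :: "nat \<Rightarrow> nat" where "alp x = (if even x then x+1 else x-1)"
definition tau :: "nat \<Rightarrow> nat \<Rightarrow> nat" where
  "tau g p = (if even p then p else if p < 4*g+4 then p+(4*g+4) else p-(4*g+4))"

lemma e1_ev: "e1 g (2*r) = (if r < 4*g+3 then 2*r else 16*g+15)"
  by (simp add: e1_def)
lemma e1_od: "e1 g (Suc (2*r)) = (if r < 2*g+2 then 4*r+8*g+6 else if r < 4*g+3 then 4*r else 16*g+12)"
  by (simp add: e1_def)
lemma e2_ev: "e2 g (2*r) = (if r < 4*g+3 then 2*r+1 else 16*g+14)"
  by (simp add: e2_def)
lemma e2_od: "e2 g (Suc (2*r)) = (if r < 2*g+2 then 4*r+8*g+9 else if r < 4*g+3 then 4*r-1 else 16*g+11)"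
  by (simp add: e2_def)
lemma tau_ev: "tau g (2*r) = 2*r" by (simp add: tau_def)
lemma tau_od: "tau g (Suc (2*r)) = (if r < 2*g+2 then 2*(r+2*g+2)+1 else 2*(r-(2*g+2))+1)"
  by (simp add: tau_def) arith

lemma par_cases: fixes p :: nat obtains r where "p = 2*r" | r where "p = Suc (2*r)"
proof (cases "even p")
  case True then show ?thesis using that(1) by (auto elim: evenE)
next
  case False then obtain r where "p = 2*r+1" by (auto elim: oddE)
  then show ?thesis using that(2) by simp
qed

lemma alp_ev: "alp (2*x) = 2*x+1" by (simp add: alp_def)
lemma alp_od: "alp (Suc (2*x)) = 2*x" by (simp add: alp_def)

lemma K: assumes "p < 2*(4*g+4)" shows "alp (e1 g p) = e2 g (tau g p)"
proof (cases p rule: par_cases)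
  case (1 r)
  show ?thesis
  proof (cases "r < 4*g+3")
    case True then show ?thesis using 1 by (simp add: e1_ev e2_ev tau_ev alp_ev)
  next
    case False then have "r = 4*g+3" using 1 assms by arith
    have a: "e1 g (2*r) = 16*g+15" using False by (simp add: e1_ev)
    have b: "e2 g (2*r) = 16*g+14" using False by (simp add: e2_ev)
    show ?thesis unfolding 1 tau_ev a b alp_def by simp
  qed
next
  case (2 r)
  have rb: "r < 4*g+4" using 2 assms by arith
  consider "r < 2*g+1" | "r = 2*g+1" | "2*g+2 \<le> r" "r < 4*g+3" | "r = 4*g+3"
    using rb by (cases "r < 2*g+1"; cases "r = 2*g+1"; cases "r < 4*g+3"; auto)
  then show ?thesis
  proof cases
    case 1
    have a: "e1 g p = 2*(2*r+4*g+3)" using 1 2 by (simp add: e1_od)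
    have b: "tau g p = Suc (2*(r+2*g+2))" using 1 2 by (simp add: tau_od)
    have c: "e2 g (Suc (2*(r+2*g+2))) = 4*(r+2*g+2) - 1" using 1 by (subst e2_od) simp
    show ?thesis using a b c by (simp add: alp_def)
  next
    case 3
    have a: "e1 g p = 2*(2*r)" using 3 2 by (simp add: e1_od)
    have b: "tau g p = Suc (2*(r-(2*g+2)))" using 3 2 by (simp add: tau_od)
    have c: "e2 g (Suc (2*(r-(2*g+2)))) = 4*(r-(2*g+2))+8*g+9" using 3 by (subst e2_od) simp
    show ?thesis using a b c 3 by (simp add: alp_def)
  next
    case 2
    have a: "e1 g p = 4*r+8*g+6" unfolding \<open>p = Suc (2*r)\<close> e1_od using 2 by simp
    have b: "tau g p = Suc (2*(4*g+3))" unfolding \<open>p = Suc (2*r)\<close> tau_od using 2 by simp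
    have c: "e2 g (Suc (2*(4*g+3))) = 16*g+11" by (subst e2_od) simp
    show ?thesis using a b c 2 by (simp add: alp_def)
  next
    case 4
    have a: "e1 g p = 16*g+12" unfolding \<open>p = Suc (2*r)\<close> e1_od using 4 by simp
    have b: "tau g p = Suc (2*(2*g+1))" unfolding \<open>p = Suc (2*r)\<close> tau_od using 4 by simp
    have c: "e2 g (Suc (2*(2*g+1))) = 4*(2*g+1)+8*g+9" by (subst e2_od) simp
    show ?thesis using a b c by (simp add: alp_def)
  qed
qed
lemma e1_cases: assumes "p < 2*(4*g+4)"
  shows "(\<exists>r. p = 2*r \<and> r < 4*g+3 \<and> e1 g p = 2*r) \<or> (p = 8*g+6 \<and> e1 g p = 16*g+15)
   \<or> (\<exists>r. p = Suc (2*r) \<and> r < 2*g+2 \<and> e1 g p = 4*r+8*g+6)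
   \<or> (\<exists>r. p = Suc (2*r) \<and> 2*g+2 \<le> r \<and> r < 4*g+3 \<and> e1 g p = 4*r)
   \<or> (p = 8*g+7 \<and> e1 g p = 16*g+12)"
proof (cases p rule: par_cases)
  case (1 r)
  show ?thesis
  proof (cases "r < 4*g+3")
    case True then show ?thesis using 1 by (simp add: e1_ev)
  next
    case False
    then have r: "r = 4*g+3" using 1 assms by arith
    have "e1 g p = 16*g+15" unfolding 1 e1_ev using r by simp
    then show ?thesis using 1 r by simp
  qed
next
  case (2 r)
  show ?thesis
  proof (cases "r < 4*g+3")
    case True then show ?thesis using 2 by (cases "r < 2*g+2") (simp_all add: e1_od)
  next
    case False
    then have r: "r = 4*g+3" using 2 assms by arith
    have "e1 g p = 16*g+12" unfolding 2 e1_od using r by simp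
    then show ?thesis using 2 r by simp
  qed
qed

lemma mod4a: "4*(a::nat)+8*g+6 \<noteq> 4*b" by presburger
lemma par2: "2*(a::nat) \<noteq> 16*g+15" by presburger

lemma e1_inj: assumes "p < 2*(4*g+4)" "p' < 2*(4*g+4)" "e1 g p = e1 g p'" shows "p = p'"
  using e1_cases[OF assms(1)] e1_cases[OF assms(2)] assms(3) mod4a par2
  by (elim disjE exE conjE; simp; metis)
lemma e1_lt: "p < 2*(4*g+4) \<Longrightarrow> e1 g p < 16*g+16"
  using e1_cases[of p g] by auto
lemma e1_par: "p < 2*(4*g+4) \<Longrightarrow> e1 g p \<noteq> 16*g+14 \<and> (even (e1 g p) \<or> e1 g p = 16*g+15)"
  using e1_cases[of p g] by auto
lemma tau_lt: "p < 2*(4*g+4) \<Longrightarrow> tau g p < 2*(4*g+4)"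
  unfolding tau_def by auto
lemma tau_tau: "p < 2*(4*g+4) \<Longrightarrow> tau g (tau g p) = p"
  unfolding tau_def by auto
lemma alp_alp: "alp (alp x) = x"
  unfolding alp_def by auto
lemma e2_eq: "q < 2*(4*g+4) \<Longrightarrow> e2 g q = alp (e1 g (tau g q))"
  using K[OF tau_lt[of q g]] tau_tau[of q g] by simp
lemma par3: "even (x::nat) \<Longrightarrow> x \<noteq> 16*g+15" by presburger
lemma e2_lt: "q < 2*(4*g+4) \<Longrightarrow> e2 g q < 16*g+16"
  using e1_lt[OF tau_lt[of q g]] e1_par[OF tau_lt[of q g]] e2_eq[of q g]
    par3[of "e1 g (tau g q)" g]
  unfolding alp_def by auto
lemma e2_inj: assumes "p < 2*(4*g+4)" "p' < 2*(4*g+4)" "e2 g p = e2 g p'" shows "p = p'"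
proof -
  have "alp (e1 g (tau g p)) = alp (e1 g (tau g p'))" using assms e2_eq by metis
  then have "e1 g (tau g p) = e1 g (tau g p')" by (metis alp_alp)
  then have "tau g p = tau g p'" using e1_inj tau_lt assms by blast
  then show ?thesis using tau_tau assms by metis
qed
lemma e12_disj: assumes "p < 2*(4*g+4)" "q < 2*(4*g+4)" shows "e1 g p \<noteq> e2 g q"
proof
  assume h: "e1 g p = e2 g q"
  have t: "tau g q < 2*(4*g+4)" using tau_lt assms by blast
  have "e1 g p = alp (e1 g (tau g q))" using h e2_eq assms by metis
  then show False using e1_par[OF assms(1)] e1_par[OF t] unfolding alp_def
    by (auto split: if_splits)
qed

lemma cover: "{0..<16*g+16} = e1 g ` {..<2*(4*g+4)} \<union> e2 g ` {..<2*(4*g+4)}"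
proof -
  let ?A = "e1 g ` {..<2*(4*g+4)}" and ?B = "e2 g ` {..<2*(4*g+4)}"
  have ia: "inj_on (e1 g) {..<2*(4*g+4)}" by (rule inj_onI) (use e1_inj in auto)
  have ib: "inj_on (e2 g) {..<2*(4*g+4)}" by (rule inj_onI) (use e2_inj in auto)
  have d: "?A \<inter> ?B = {}" using e12_disj by auto
  have "card (?A \<union> ?B) = card ?A + card ?B" using d by (simp add: card_Un_disjoint)
  also have "\<dots> = 16*g+16" using card_image[OF ia] card_image[OF ib] by simp
  finally have c: "card (?A \<union> ?B) = card {0..<16*g+16}" by simp
  have s: "?A \<union> ?B \<subseteq> {0..<16*g+16}" using e1_lt e2_lt by auto
  show ?thesis using card_subset_eq[OF _ s c] by simp
qed

lemma nth_pairs: "p < 2*n \<Longrightarrow> concat (map (\<lambda>m. [f m, h m]) [0..<n]) ! p = (if even p then f (p div 2) else h (p div 2))"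
proof (induction n arbitrary: p)
  case 0 then show ?case by simp
next
  case (Suc n)
  have l: "length (concat (map (\<lambda>m. [f m, h m]) [0..<n])) = 2*n"
    by (induction n) auto
  show ?case
  proof (cases "p < 2*n")
    case True then show ?thesis using Suc l by (simp add: nth_append)
  next
    case False
    then have "p = 2*n \<or> p = 2*n+1" using Suc.prems by auto
    then show ?thesis using l by (auto simp: nth_append)
  qed
qed
lemma len_pairs: "length (concat (map (\<lambda>m. [f m, h m]) [0..<n])) = 2*n"
  by (induction n) auto
lemma C1_len: "length (C1_idx (4*g+4)) = 8*g+8"
proof -
  have a: "(4*g+4-2) div 2 + 1 = 2*g+2" "(4*g+4-4) div 2 + 1 = 2*g+1" by simp_all
  show ?thesis unfolding C1_idx_def a by (simp add: len_pairs)
qed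
lemma C2_len: "length (C2_idx (4*g+4)) = 8*g+8"
proof -
  have a: "(4*g+4-2) div 2 + 1 = 2*g+2" "(4*g+4-4) div 2 + 1 = 2*g+1" by simp_all
  show ?thesis unfolding C2_idx_def a by (simp add: len_pairs)
qed

lemma C1_nth: assumes "p < 8*g+8" shows "C1_idx (4*g+4) ! p = e1 g p"
proof -
  have a: "(4*g+4-2) div 2 + 1 = 2*g+2" "(4*g+4-4) div 2 + 1 = 2*g+1" by simp_all
  let ?A = "concat (map (\<lambda>m. [2*m, 2*(2*m+(4*g+4)-1)]) [0..<2*g+2])"
  let ?B = "concat (map (\<lambda>n. [2*n+(4*g+4), 2*(2*n+(4*g+4))]) [0..<2*g+1])"
  have eq: "C1_idx (4*g+4) = ?A @ ?B @ [4*(4*g+4)-1, 4*(4*g+4)-4]"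
    unfolding C1_idx_def a ..
  have lA: "length ?A = 4*g+4" by (simp only: len_pairs) simp
  have lB: "length ?B = 4*g+2" by (simp only: len_pairs) simp
  consider "p < 4*g+4" | "4*g+4 \<le> p" "p < 8*g+6" | "p = 8*g+6" | "p = 8*g+7" using assms by linarith
  then show ?thesis
  proof cases
    case 1
    then have "C1_idx (4*g+4) ! p = ?A ! p" unfolding eq using lA by (simp add: nth_append del: upt_Suc)
    also have "\<dots> = (if even p then 2*(p div 2) else 2*(2*(p div 2)+(4*g+4)-1))"
      using 1 by (subst nth_pairs) auto
    also have "\<dots> = e1 g p"
    proof (cases p rule: par_cases)
      case (1 r) then show ?thesis using \<open>p < 4*g+4\<close> by (simp add: e1_ev)
    next
      case (2 r) then show ?thesis using \<open>p < 4*g+4\<close> by (simp add: e1_od)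
    qed
    finally show ?thesis .
  next
    case 2
    define p1 where "p1 = p - (4*g+4)"
    have pp: "p = 4*g+4+p1" "p1 < 4*g+2" using 2 unfolding p1_def by auto
    then have "C1_idx (4*g+4) ! p = ?B ! p1" unfolding eq using lA lB by (simp add: nth_append del: upt_Suc)
    also have "\<dots> = (if even p1 then 2*(p1 div 2)+(4*g+4) else 2*(2*(p1 div 2)+(4*g+4)))"
      using pp by (subst nth_pairs) auto
    also have "\<dots> = e1 g p"
    proof (cases p1 rule: par_cases)
      case (1 s)
      have pe: "p = 2*(s+2*g+2)" using pp 1 by simp
      have "s+2*g+2 < 4*g+3" using pp 1 by simp
      then have "e1 g p = 2*(s+2*g+2)" unfolding pe by (subst e1_ev) simp
      then show ?thesis using 1 by simp
    next
      case (2 s)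
      have pe: "p = Suc (2*(s+2*g+2))" using pp 2 by simp
      have "s+2*g+2 < 4*g+3" using pp 2 by simp
      then have "e1 g p = 4*(s+2*g+2)" unfolding pe by (subst e1_od) simp
      then show ?thesis using 2 by simp
    qed
    finally show ?thesis .
  next
    case 3
    have pe: "p = 2*(4*g+3)" using 3 by simp
    have "e1 g p = 16*g+15" unfolding pe by (subst e1_ev) simp
    then show ?thesis unfolding eq using 3 lA lB by (simp add: nth_append del: upt_Suc)
  next
    case 4
    have pe: "p = Suc (2*(4*g+3))" using 4 by simp
    have "e1 g p = 16*g+12" unfolding pe by (subst e1_od) simp
    then show ?thesis unfolding eq using 4 lA lB by (simp add: nth_append del: upt_Suc)
  qed
qed
lemma C2_nth: assumes "p < 8*g+8" shows "C2_idx (4*g+4) ! p = e2 g p"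
proof -
  have a: "(4*g+4-2) div 2 + 1 = 2*g+2" "(4*g+4-4) div 2 + 1 = 2*g+1" by simp_all
  let ?A = "concat (map (\<lambda>m. [2*m+1, 2*(2*m+(4*g+4))+1]) [0..<2*g+2])"
  let ?B = "concat (map (\<lambda>n. [2*n+(4*g+4)+1, 2*(2*n+(4*g+4))-1]) [0..<2*g+1])"
  have eq: "C2_idx (4*g+4) = ?A @ ?B @ [4*(4*g+4)-2, 4*(4*g+4)-5]"
    unfolding C2_idx_def a ..
  have lA: "length ?A = 4*g+4" by (simp only: len_pairs) simp
  have lB: "length ?B = 4*g+2" by (simp only: len_pairs) simp
  consider "p < 4*g+4" | "4*g+4 \<le> p" "p < 8*g+6" | "p = 8*g+6" | "p = 8*g+7" using assms by linarith
  then show ?thesis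
  proof cases
    case 1
    then have "C2_idx (4*g+4) ! p = ?A ! p" unfolding eq using lA by (simp add: nth_append del: upt_Suc)
    also have "\<dots> = (if even p then 2*(p div 2)+1 else 2*(2*(p div 2)+(4*g+4))+1)"
      using 1 by (subst nth_pairs) auto
    also have "\<dots> = e2 g p"
    proof (cases p rule: par_cases)
      case (1 r) then show ?thesis using \<open>p < 4*g+4\<close> by (simp add: e2_ev)
    next
      case (2 r) then show ?thesis using \<open>p < 4*g+4\<close> by (simp add: e2_od)
    qed
    finally show ?thesis .
  next
    case 2
    define p1 where "p1 = p - (4*g+4)"
    have pp: "p = 4*g+4+p1" "p1 < 4*g+2" using 2 unfolding p1_def by auto
    then have "C2_idx (4*g+4) ! p = ?B ! p1" unfolding eq using lA lB by (simp add: nth_append del: upt_Suc)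
    also have "\<dots> = (if even p1 then 2*(p1 div 2)+(4*g+4)+1 else 2*(2*(p1 div 2)+(4*g+4))-1)"
      using pp by (subst nth_pairs) auto
    also have "\<dots> = e2 g p"
    proof (cases p1 rule: par_cases)
      case (1 s)
      have pe: "p = 2*(s+2*g+2)" using pp 1 by simp
      have "s+2*g+2 < 4*g+3" using pp 1 by simp
      then have "e2 g p = 2*(s+2*g+2)+1" unfolding pe by (subst e2_ev) simp
      then show ?thesis using 1 by simp
    next
      case (2 s)
      have pe: "p = Suc (2*(s+2*g+2))" using pp 2 by simp
      have "s+2*g+2 < 4*g+3" using pp 2 by simp
      then have "e2 g p = 4*(s+2*g+2)-1" unfolding pe by (subst e2_od) simp
      then show ?thesis using 2 by simp
    qed
    finally show ?thesis .
  next
    case 3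
    have pe: "p = 2*(4*g+3)" using 3 by simp
    have "e2 g p = 16*g+14" unfolding pe by (subst e2_ev) simp
    then show ?thesis unfolding eq using 3 lA lB by (simp add: nth_append del: upt_Suc)
  next
    case 4
    have pe: "p = Suc (2*(4*g+3))" using 4 by simp
    have "e2 g p = 16*g+11" unfolding pe by (subst e2_od) simp
    then show ?thesis unfolding eq using 4 lA lB by (simp add: nth_append del: upt_Suc)
  qed
qed


lemma cyc_step: assumes "distinct xs" "i < length xs"
  shows "cycle_of_list xs (xs ! i) = xs ! ((i+1) mod length xs)"
proof -
  have eq: "map (cycle_of_list xs ^^ 1) xs = rotate 1 xs" by (rule cyclic_rotation[OF assms(1)])
  have m: "map (cycle_of_list xs ^^ 1) xs ! i = (cycle_of_list xs ^^ 1) (xs!i)" by (rule nth_map[OF assms(2)])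
  have r: "rotate 1 xs ! i = xs ! ((1+i) mod length xs)" by (rule nth_rotate[OF assms(2)])
  show ?thesis using eq m r by simp
qed

lemma foldr_comp: "foldr (\<circ>) (map f xs) g = foldr (\<circ>) (map f xs) id \<circ> g"
  by (induction xs) auto

lemma foldr_trans:
  assumes inj: "inj_on c {0..<2*n}"
  shows "(\<forall>x<2*n. foldr (\<circ>) (map (\<lambda>i. cycle_of_list [c (2*i), c (2*i+1)]) [0..<n]) id (c x) = c (alp x))
    \<and> (\<forall>y. y \<notin> c ` {0..<2*n} \<longrightarrow> foldr (\<circ>) (map (\<lambda>i. cycle_of_list [c (2*i), c (2*i+1)]) [0..<n]) id y = y)"
  using inj
proof (induction n)
  case 0 then show ?case by simp
next
  case (Suc n)
  let ?A = "foldr (\<circ>) (map (\<lambda>i. cycle_of_list [c (2*i), c (2*i+1)]) [0..<n]) id"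
  let ?t = "cycle_of_list [c (2*n), c (2*n+1)]"
  have A: "foldr (\<circ>) (map (\<lambda>i. cycle_of_list [c (2*i), c (2*i+1)]) [0..<Suc n]) id = ?A \<circ> ?t"
  proof -
    have "foldr (\<circ>) (map (\<lambda>i. cycle_of_list [c (2*i), c (2*i+1)]) [0..<Suc n]) id
       = foldr (\<circ>) (map (\<lambda>i. cycle_of_list [c (2*i), c (2*i+1)]) [0..<n]) ?t" by simp
    also have "\<dots> = ?A \<circ> ?t" by (rule foldr_comp)
    finally show ?thesis .
  qed
  have inj': "inj_on c {0..<2*n}" using Suc.prems by (rule inj_on_subset) auto
  have IH1: "\<And>x. x < 2*n \<Longrightarrow> ?A (c x) = c (alp x)" using Suc.IH[OF inj'] by blast
  have IH2: "\<And>y. y \<notin> c ` {0..<2*n} \<Longrightarrow> ?A y = y" using Suc.IH[OF inj'] by blast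
  have t: "?t y = transpose (c (2*n)) (c (2*n+1)) y" for y by simp
  show ?case
  proof (intro conjI allI impI)
    fix x assume x: "x < 2 * Suc n"
    show "foldr (\<circ>) (map (\<lambda>i. cycle_of_list [c (2*i), c (2*i+1)]) [0..<Suc n]) id (c x) = c (alp x)"
    proof (cases "x < 2*n")
      case True
      have "c x \<noteq> c (2*n)" "c x \<noteq> c (2*n+1)"
        using True x Suc.prems by (auto dest: inj_onD)
      then have tt: "?t (c x) = c x" unfolding t by simp
      show ?thesis unfolding A using IH1[OF True] tt by (metis comp_apply)
    next
      case False
      then have "x = 2*n \<or> x = 2*n+1" using x by auto
      then show ?thesis
      proof
        assume xe: "x = 2*n"
        have "c (2*n+1) \<notin> c ` {0..<2*n}" using Suc.prems by (auto dest: inj_onD)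
        then have "?A (c (2*n+1)) = c (2*n+1)" by (rule IH2)
        moreover have "?t (c (2*n)) = c (2*n+1)" unfolding t by simp
        moreover have "alp (2*n) = 2*n+1" by (simp add: alp_def)
        ultimately show ?thesis unfolding A xe comp_apply by simp
      next
        assume xe: "x = 2*n+1"
        have "c (2*n) \<notin> c ` {0..<2*n}" using Suc.prems by (auto dest: inj_onD)
        then have "?A (c (2*n)) = c (2*n)" by (rule IH2)
        moreover have "?t (c (2*n+1)) = c (2*n)" unfolding t by simp
        moreover have "alp (2*n+1) = 2*n" by (simp add: alp_def)
        ultimately show ?thesis unfolding A xe comp_apply by simp
      qed
    qed
  next
    fix y assume y: "y \<notin> c ` {0..<2 * Suc n}"
    then have "y \<noteq> c (2*n)" "y \<noteq> c (2*n+1)" "y \<notin> c ` {0..<2*n}" by auto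
    then show "foldr (\<circ>) (map (\<lambda>i. cycle_of_list [c (2*i), c (2*i+1)]) [0..<Suc n]) id y = y"
    proof -
      have "?t y = y" unfolding t using \<open>y \<noteq> c (2*n)\<close> \<open>y \<noteq> c (2*n+1)\<close> by simp
      then show ?thesis unfolding A using IH2[OF \<open>y \<notin> c ` {0..<2*n}\<close>] by (metis comp_apply)
    qed
  qed
qed
lemma mod_hi: "(N::nat) \<le> x \<Longrightarrow> x < 2*N \<Longrightarrow> x mod N = x - N"
  by (simp add: le_mod_geq)

lemma tau_succ: assumes p: "p < 8*g+8"
  shows "tau g (Suc p mod (8*g+8)) = (tau g p + (4*g+5)) mod (8*g+8)"
proof (cases p rule: par_cases)
  case (1 r)
  have s: "Suc p mod (8*g+8) = Suc p" using 1 p by (intro mod_less) presburger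
  have tp: "tau g p = p" using 1 by (simp add: tau_ev)
  show ?thesis
  proof (cases "Suc p < 4*g+4")
    case True
    have "tau g (Suc p) = Suc p + (4*g+4)" using 1 True by (simp add: tau_def)
    moreover have "(p + (4*g+5)) mod (8*g+8) = p + (4*g+5)" using True by (intro mod_less) simp
    ultimately show ?thesis unfolding s tp by simp
  next
    case False
    have "tau g (Suc p) = Suc p - (4*g+4)" using 1 False by (simp add: tau_def)
    moreover have "(p + (4*g+5)) mod (8*g+8) = p + (4*g+5) - (8*g+8)" using False p by (intro mod_hi) simp_all
    ultimately show ?thesis unfolding s tp using False by simp
  qed
next
  case (2 r)
  have tp: "tau g p = (if p < 4*g+4 then p + (4*g+4) else p - (4*g+4))" using 2 by (simp add: tau_def)
  show ?thesis
  proof (cases "Suc p < 8*g+8")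
    case True
    have s: "Suc p mod (8*g+8) = Suc p" using True by simp
    have "tau g (Suc p) = Suc p" using 2 by (simp add: tau_def)
    moreover have "(tau g p + (4*g+5)) mod (8*g+8) = Suc p"
    proof (cases "p < 4*g+4")
      case True then show ?thesis unfolding tp using p by (simp add: mod_hi)
    next
      case False then show ?thesis unfolding tp using p \<open>Suc p < 8*g+8\<close> by simp
    qed
    ultimately show ?thesis unfolding s by simp
  next
    case False
    then have pe: "p = 8*g+7" using p by simp
    have "tau g 0 = 0" by (simp add: tau_def)
    moreover have "Suc p mod (8*g+8) = 0" proof - have "Suc p = 8*g+8" using pe by simp then show ?thesis by (simp only: mod_self) qed
    moreover have "tau g p + (4*g+5) = 8*g+8" unfolding tp using pe by simp
    ultimately show ?thesis by simp
  qed
qed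

context
  fixes g :: nat and c :: "nat \<Rightarrow> 'a" and F :: "'a set"
  assumes bij: "bij_betw c {0..<16*g+16} F"
begin

lemma inj_c: "inj_on c {0..<16*g+16}" using bij by (simp add: bij_betw_def)
lemma F_eq: "F = c ` {0..<16*g+16}" using bij by (simp add: bij_betw_def)

lemma c_eq: "x < 16*g+16 \<Longrightarrow> y < 16*g+16 \<Longrightarrow> c x = c y \<longleftrightarrow> x = y"
  using inj_c by (auto dest: inj_onD)

lemma e1_lt': "p < 8*g+8 \<Longrightarrow> e1 g p < 16*g+16" using e1_lt[of p g] by simp
lemma e2_lt': "p < 8*g+8 \<Longrightarrow> e2 g p < 16*g+16" using e2_lt[of p g] by simp

lemma a_c: "x < 16*g+16 \<Longrightarrow> perm_a c (4*g+4) (c x) = c (alp x)"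
proof -
  assume x: "x < 16*g+16"
  have i: "inj_on c {0..<2*(2*(4*g+4))}" using inj_c by simp
  show ?thesis using conjunct1[OF foldr_trans[OF i]] x unfolding perm_a_def by simp
qed
lemma a_out: "y \<notin> F \<Longrightarrow> perm_a c (4*g+4) y = y"
proof -
  assume y: "y \<notin> F"
  have i: "inj_on c {0..<2*(2*(4*g+4))}" using inj_c by simp
  have "y \<notin> c ` {0..<2*(2*(4*g+4))}" using y F_eq by simp
  then show ?thesis using conjunct2[OF foldr_trans[OF i]] unfolding perm_a_def by simp
qed

lemma setC1: "set (C1_idx (4*g+4)) = e1 g ` {..<8*g+8}"
proof (intro equalityI subsetI)
  fix x assume "x \<in> set (C1_idx (4*g+4))"
  then obtain i where "i < 8*g+8" "x = C1_idx (4*g+4) ! i" by (auto simp: in_set_conv_nth C1_len)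
  then show "x \<in> e1 g ` {..<8*g+8}" by (simp add: C1_nth)
next
  fix x assume "x \<in> e1 g ` {..<8*g+8}"
  then obtain p where p: "p < 8*g+8" "x = e1 g p" by auto
  then have "x = C1_idx (4*g+4) ! p" by (simp add: C1_nth)
  then show "x \<in> set (C1_idx (4*g+4))" using p(1) C1_len by simp
qed
lemma setC2: "set (C2_idx (4*g+4)) = e2 g ` {..<8*g+8}"
proof (intro equalityI subsetI)
  fix x assume "x \<in> set (C2_idx (4*g+4))"
  then obtain i where "i < 8*g+8" "x = C2_idx (4*g+4) ! i" by (auto simp: in_set_conv_nth C2_len)
  then show "x \<in> e2 g ` {..<8*g+8}" by (simp add: C2_nth)
next
  fix x assume "x \<in> e2 g ` {..<8*g+8}"
  then obtain p where p: "p < 8*g+8" "x = e2 g p" by auto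
  then have "x = C2_idx (4*g+4) ! p" by (simp add: C2_nth)
  then show "x \<in> set (C2_idx (4*g+4))" using p(1) C2_len by simp
qed
lemma distC1: "distinct (map c (C1_idx (4*g+4)))"
proof -
  have "distinct (C1_idx (4*g+4))"
    unfolding distinct_conv_nth C1_len
  proof (intro allI impI)
    fix i j assume "i < 8*g+8" "j < 8*g+8" "i \<noteq> j"
    then show "C1_idx (4*g+4) ! i \<noteq> C1_idx (4*g+4) ! j"
    proof -
      have "e1 g i \<noteq> e1 g j" using e1_inj[of i g j] \<open>i < 8*g+8\<close> \<open>j < 8*g+8\<close> \<open>i \<noteq> j\<close> by auto
      then show ?thesis using \<open>i < 8*g+8\<close> \<open>j < 8*g+8\<close> by (simp add: C1_nth)
    qed
  qed
  moreover have "inj_on c (set (C1_idx (4*g+4)))"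
    using inj_c e1_lt' setC1 by (auto intro: inj_on_subset)
  ultimately show ?thesis by (simp add: distinct_map)
qed
lemma distC2: "distinct (map c (C2_idx (4*g+4)))"
proof -
  have "distinct (C2_idx (4*g+4))"
    unfolding distinct_conv_nth C2_len
  proof (intro allI impI)
    fix i j assume "i < 8*g+8" "j < 8*g+8" "i \<noteq> j"
    then show "C2_idx (4*g+4) ! i \<noteq> C2_idx (4*g+4) ! j"
    proof -
      have "e2 g i \<noteq> e2 g j" using e2_inj[of i g j] \<open>i < 8*g+8\<close> \<open>j < 8*g+8\<close> \<open>i \<noteq> j\<close> by auto
      then show ?thesis using \<open>i < 8*g+8\<close> \<open>j < 8*g+8\<close> by (simp add: C2_nth)
    qed
  qed
  moreover have "inj_on c (set (C2_idx (4*g+4)))"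
    using inj_c e2_lt' setC2 by (auto intro: inj_on_subset)
  ultimately show ?thesis by (simp add: distinct_map)
qed

lemma e12_disj': "p < 8*g+8 \<Longrightarrow> q < 8*g+8 \<Longrightarrow> e1 g p \<noteq> e2 g q"
  using e12_disj[of p g q] by simp

lemma b1: assumes p: "p < 8*g+8"
  shows "perm_b c (4*g+4) (c (e1 g p)) = c (e1 g (Suc p mod (8*g+8)))"
proof -
  have n1: "c (e1 g p) \<notin> set (map c (C2_idx (4*g+4)))"
  proof
    assume "c (e1 g p) \<in> set (map c (C2_idx (4*g+4)))"
    then obtain q where q: "q < 8*g+8" "c (e1 g p) = c (e2 g q)" using setC2 by auto
    then have "e1 g p = e2 g q" using c_eq e1_lt' e2_lt' p by blast
    then show False using e12_disj' p q(1) by blast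
  qed
  have l: "length (map c (C1_idx (4*g+4))) = 8*g+8" by (simp add: C1_len)
  have x: "c (e1 g p) = map c (C1_idx (4*g+4)) ! p" using p by (simp add: C1_len C1_nth)
  have "perm_b c (4*g+4) (c (e1 g p)) = cycle_of_list (map c (C1_idx (4*g+4))) (c (e1 g p))"
    unfolding perm_b_def using id_outside_supp[OF n1] by simp
  also have "\<dots> = map c (C1_idx (4*g+4)) ! ((p+1) mod (8*g+8))"
    unfolding x using cyc_step[OF distC1] p l by simp
  also have "\<dots> = c (e1 g (Suc p mod (8*g+8)))" by (simp add: C1_len C1_nth)
  finally show ?thesis .
qed

lemma b2: assumes p: "p < 8*g+8"
  shows "perm_b c (4*g+4) (c (e2 g p)) = c (e2 g (Suc p mod (8*g+8)))"
proof -
  have n1: "c (e2 g q) \<notin> set (map c (C1_idx (4*g+4)))" if q: "q < 8*g+8" for q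
  proof
    assume "c (e2 g q) \<in> set (map c (C1_idx (4*g+4)))"
    then obtain r where r: "r < 8*g+8" "c (e2 g q) = c (e1 g r)" using setC1 by auto
    then have "e1 g r = e2 g q" using c_eq e1_lt' e2_lt' q by metis
    then show False using e12_disj' q r(1) by blast
  qed
  have l: "length (map c (C2_idx (4*g+4))) = 8*g+8" by (simp add: C2_len)
  have x: "c (e2 g p) = map c (C2_idx (4*g+4)) ! p" using p by (simp add: C2_len C2_nth)
  have "cycle_of_list (map c (C2_idx (4*g+4))) (c (e2 g p)) = map c (C2_idx (4*g+4)) ! ((p+1) mod (8*g+8))"
    unfolding x using cyc_step[OF distC2] p l by simp
  also have "\<dots> = c (e2 g (Suc p mod (8*g+8)))" by (simp add: C2_len C2_nth)
  finally have y: "cycle_of_list (map c (C2_idx (4*g+4))) (c (e2 g p)) = c (e2 g (Suc p mod (8*g+8)))" .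
  have "Suc p mod (8*g+8) < 8*g+8" by simp
  then show ?thesis unfolding perm_b_def comp_apply y using id_outside_supp[OF n1] by blast
qed

lemma b_out: assumes y: "y \<notin> F" shows "perm_b c (4*g+4) y = y"
proof -
  have s1: "set (map c (C1_idx (4*g+4))) \<subseteq> F" using setC1 e1_lt' F_eq by auto
  have s2: "set (map c (C2_idx (4*g+4))) \<subseteq> F" using setC2 e2_lt' F_eq by auto
  show ?thesis unfolding perm_b_def using y s1 s2 id_outside_supp by (metis comp_apply subsetD)
qed

lemma a_perm: "perm_a c (4*g+4) permutes F"
proof -
  have "perm_a c (4*g+4) (perm_a c (4*g+4) x) = x" for x
  proof (cases "x \<in> F")
    case True then obtain y where y: "y < 16*g+16" "x = c y" using F_eq by auto
    have "alp y < 16*g+16" using y(1) unfolding alp_def by presburger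
    then show ?thesis using y a_c alp_alp by simp
  next
    case False then show ?thesis using a_out by simp
  qed
  then show ?thesis unfolding permutes_def using a_out by metis
qed

lemma b_perm: "perm_b c (4*g+4) permutes F"
proof -
  have s1: "set (map c (C1_idx (4*g+4))) \<subseteq> F" using setC1 e1_lt' F_eq by auto
  have s2: "set (map c (C2_idx (4*g+4))) \<subseteq> F" using setC2 e2_lt' F_eq by auto
  show ?thesis unfolding perm_b_def
    by (rule permutes_compose; rule permutes_subset[OF cycle_permutes]) (use s1 s2 in auto)
qed

abbreviation "pa \<equiv> perm_a c (4*g+4)"
abbreviation "pb \<equiv> perm_b c (4*g+4)"

lemma F_cases: assumes "x \<in> F" obtains p where "p < 8*g+8" "x = c (e1 g p)" | p where "p < 8*g+8" "x = c (e2 g p)"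
proof -
  obtain y where y: "y < 16*g+16" "x = c y" using assms F_eq by auto
  then have "y \<in> e1 g ` {..<2*(4*g+4)} \<union> e2 g ` {..<2*(4*g+4)}" using cover[of g] by auto
  then show ?thesis using that y by auto
qed

lemma a1: "p < 8*g+8 \<Longrightarrow> pa (c (e1 g p)) = c (e2 g (tau g p))"
  using a_c[OF e1_lt'] K[of p g] by simp
lemma a2: assumes q: "q < 8*g+8" shows "pa (c (e2 g q)) = c (e1 g (tau g q))"
proof -
  have "pa (c (e2 g q)) = c (alp (e2 g q))" by (rule a_c[OF e2_lt'[OF q]])
  also have "alp (e2 g q) = e1 g (tau g q)" using e2_eq[of q g] alp_alp q by simp
  finally show ?thesis .
qed
lemma tau_lt': "p < 8*g+8 \<Longrightarrow> tau g p < 8*g+8" using tau_lt[of p g] by simp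

lemma bpow1: "p < 8*g+8 \<Longrightarrow> (pb ^^ j) (c (e1 g p)) = c (e1 g ((p+j) mod (8*g+8)))"
proof (induction j)
  case 0 then show ?case by simp
next
  case (Suc j)
  have "(pb ^^ Suc j) (c (e1 g p)) = pb (c (e1 g ((p+j) mod (8*g+8))))" using Suc by simp
  also have "\<dots> = c (e1 g (Suc ((p+j) mod (8*g+8)) mod (8*g+8)))" by (rule b1) simp
  also have "Suc ((p+j) mod (8*g+8)) mod (8*g+8) = (p + Suc j) mod (8*g+8)" by (simp add: mod_Suc_eq)
  finally show ?case .
qed
lemma bpow2: "p < 8*g+8 \<Longrightarrow> (pb ^^ j) (c (e2 g p)) = c (e2 g ((p+j) mod (8*g+8)))"
proof (induction j)
  case 0 then show ?case by simp
next
  case (Suc j)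
  have "(pb ^^ Suc j) (c (e2 g p)) = pb (c (e2 g ((p+j) mod (8*g+8))))" using Suc by simp
  also have "\<dots> = c (e2 g (Suc ((p+j) mod (8*g+8)) mod (8*g+8)))" by (rule b2) simp
  also have "Suc ((p+j) mod (8*g+8)) mod (8*g+8) = (p + Suc j) mod (8*g+8)" by (simp add: mod_Suc_eq)
  finally show ?case .
qed
lemma bpow_out: "y \<notin> F \<Longrightarrow> (pb ^^ j) y = y"
  by (induction j) (simp_all add: b_out)

lemma aa: "pa \<circ> pa = id"
proof
  fix x show "(pa \<circ> pa) x = id x"
  proof (cases "x \<in> F")
    case True then obtain y where y: "y < 16*g+16" "x = c y" using F_eq by auto
    have "alp y < 16*g+16" using y(1) unfolding alp_def by presburger
    then show ?thesis using y a_c alp_alp by simp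
  next
    case False then show ?thesis using a_out by simp
  qed
qed

lemma b2k: "pb ^^ (8*g+8) = id"
proof
  fix x show "(pb ^^ (8*g+8)) x = id x"
  proof (cases "x \<in> F")
    case True then show ?thesis
      by (cases rule: F_cases) (simp_all add: bpow1 bpow2)
  next
    case False then show ?thesis using bpow_out by simp
  qed
qed

lemma ab: "pa \<circ> pb = pb ^^ (4*g+5) \<circ> pa"
proof
  fix x show "(pa \<circ> pb) x = (pb ^^ (4*g+5) \<circ> pa) x"
  proof (cases "x \<in> F")
    case True then show ?thesis
    proof (cases rule: F_cases)
      case (1 p)
      have "(pa \<circ> pb) x = c (e2 g (tau g (Suc p mod (8*g+8))))" using 1 b1 a1 by simp
      also have "\<dots> = c (e2 g ((tau g p + (4*g+5)) mod (8*g+8)))" using tau_succ 1 by simp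
      also have "\<dots> = (pb ^^ (4*g+5) \<circ> pa) x" using 1 a1 bpow2 tau_lt' by simp
      finally show ?thesis .
    next
      case (2 p)
      have "(pa \<circ> pb) x = c (e1 g (tau g (Suc p mod (8*g+8))))" using 2 b2 a2 by simp
      also have "\<dots> = c (e1 g ((tau g p + (4*g+5)) mod (8*g+8)))" using tau_succ 2 by simp
      also have "\<dots> = (pb ^^ (4*g+5) \<circ> pa) x" using 2 a2 bpow1 tau_lt' by simp
      finally show ?thesis .
    qed
  next
    case False then show ?thesis using a_out bpow_out b_out by simp
  qed
qed
end


context
  fixes a b :: "'a \<Rightarrow> 'a" and N m :: nat
  assumes aa: "a \<circ> a = id" and bN: "b ^^ N = id" and ab: "a \<circ> b = b ^^ m \<circ> a" and Npos: "N > 0"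
begin

lemma ab_pow: "a \<circ> b ^^ j = b ^^ (m*j) \<circ> a"
proof (induction j)
  case 0 then show ?case by simp
next
  case (Suc j)
  have "a \<circ> b ^^ Suc j = (a \<circ> b) \<circ> b ^^ j" by (simp add: o_assoc)
  also have "\<dots> = b ^^ m \<circ> (a \<circ> b ^^ j)" unfolding ab by (simp add: o_assoc)
  also have "\<dots> = b ^^ m \<circ> b ^^ (m*j) \<circ> a" unfolding Suc by (simp add: o_assoc)
  also have "\<dots> = b ^^ (m * Suc j) \<circ> a" by (simp add: funpow_add)
  finally show ?case .
qed

lemma apow_b: "a ^^ i \<circ> b ^^ j = b ^^ (m^i * j) \<circ> a ^^ i"
proof (induction i)
  case 0 then show ?case by simp
next
  case (Suc i)
  have "a ^^ Suc i \<circ> b ^^ j = a \<circ> (a ^^ i \<circ> b ^^ j)" by (simp add: o_assoc)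
  also have "\<dots> = (a \<circ> b ^^ (m^i * j)) \<circ> a ^^ i" unfolding Suc by (simp add: o_assoc)
  also have "\<dots> = b ^^ (m * (m^i * j)) \<circ> (a \<circ> a ^^ i)" unfolding ab_pow by (simp add: o_assoc)
  also have "\<dots> = b ^^ (m^Suc i * j) \<circ> a ^^ Suc i" by (simp add: mult.assoc)
  finally show ?case .
qed

lemma a2i: "a ^^ (2*i) = id"
proof -
  have "a ^^ 2 = id" using aa by (simp add: numeral_2_eq_2)
  then show ?thesis by (metis funpow_mult id_funpow mult.commute)
qed

lemma a_mod: "a ^^ i = a ^^ (i mod 2)"
proof -
  have "a ^^ i = a ^^ (i mod 2 + 2 * (i div 2))" by simp
  also have "\<dots> = a ^^ (i mod 2)" by (simp only: funpow_add a2i) simp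
  finally show ?thesis .
qed

lemma bNj: "b ^^ (N*j) = id"
  by (metis funpow_mult id_funpow bN)

lemma b_mod: "b ^^ j = b ^^ (j mod N)"
proof -
  have "b ^^ j = b ^^ (j mod N + N * (j div N))" by simp
  also have "\<dots> = b ^^ (j mod N)" by (simp only: funpow_add bNj) simp
  finally show ?thesis .
qed

lemma mult_form: "(b ^^ j \<circ> a ^^ i) \<circ> (b ^^ j' \<circ> a ^^ i') = b ^^ (j + m^i * j') \<circ> a ^^ (i + i')"
proof -
  have "(b ^^ j \<circ> a ^^ i) \<circ> (b ^^ j' \<circ> a ^^ i') = b ^^ j \<circ> (a ^^ i \<circ> b ^^ j') \<circ> a ^^ i'"
    by (simp add: o_assoc)
  also have "\<dots> = b ^^ (j + m^i * j') \<circ> a ^^ (i + i')" unfolding apow_b by (simp add: o_assoc funpow_add)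
  finally show ?thesis .
qed

lemma inv_form:
  shows "(b ^^ j \<circ> a ^^ i) \<circ> (b ^^ (m^i * ((N-1)*j)) \<circ> a ^^ i) = id"
    and "(b ^^ (m^i * ((N-1)*j)) \<circ> a ^^ i) \<circ> (b ^^ j \<circ> a ^^ i) = id"
proof -
  have h: "b ^^ (m^i * ((N-1)*j)) \<circ> a ^^ i = a ^^ i \<circ> b ^^ ((N-1)*j)" by (rule apow_b[symmetric])
  have aii: "a ^^ i \<circ> a ^^ i = id" using a2i[of i] by (simp add: funpow_add[symmetric] mult_2)
  have nj: "j + (N-1)*j = N*j" using Npos by (cases N) auto
  have "(b ^^ j \<circ> a ^^ i) \<circ> (a ^^ i \<circ> b ^^ ((N-1)*j)) = b ^^ j \<circ> (a ^^ i \<circ> a ^^ i) \<circ> b ^^ ((N-1)*j)"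
    by (simp add: o_assoc)
  also have "\<dots> = b ^^ (j + (N-1)*j)" unfolding aii by (simp add: funpow_add)
  finally show "(b ^^ j \<circ> a ^^ i) \<circ> (b ^^ (m^i * ((N-1)*j)) \<circ> a ^^ i) = id" unfolding h nj bNj .
  have "(a ^^ i \<circ> b ^^ ((N-1)*j)) \<circ> (b ^^ j \<circ> a ^^ i) = a ^^ i \<circ> b ^^ ((N-1)*j + j) \<circ> a ^^ i"
    by (simp add: o_assoc funpow_add)
  also have "\<dots> = id" using nj aii by (simp add: add.commute bNj)
  finally show "(b ^^ (m^i * ((N-1)*j)) \<circ> a ^^ i) \<circ> (b ^^ j \<circ> a ^^ i) = id" unfolding h .
qed
end


lemma mod_ne: "p < (N::nat) \<Longrightarrow> 0 < j \<Longrightarrow> j < N \<Longrightarrow> (p + j) mod N \<noteq> p"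
proof (cases "p + j < N")
  case True then show "0 < j \<Longrightarrow> (p + j) mod N \<noteq> p" by simp
next
  case False
  assume "p < N" "0 < j" "j < N"
  then have "(p + j) mod N = p + j - N" using False by (intro mod_hi) auto
  then show ?thesis using \<open>j < N\<close> \<open>0 < j\<close> False by arith
qed

lemma le_help: "(x::nat) < 8*g+8 \<Longrightarrow> x \<le> 2*(4*g+4) - 1" by arith

lemma le_help2: "(x::nat) \<le> 2*(4*g+4) - 1 \<Longrightarrow> x < 8*g+8" by arith

lemma main_g:
  fixes g :: nat and c :: "nat \<Rightarrow> 'a" and F :: "'a set"
  assumes bij: "bij_betw c {0..<16*g+16} F"
  defines "A \<equiv> perm_a c (4*g+4)" and "B \<equiv> perm_b c (4*g+4)"
  shows "subgroup (G1 c (4*g+4)) (perm_group F)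
    \<and> card (G1 c (4*g+4)) = 16*g+16
    \<and> (\<forall>h \<in> G1 c (4*g+4). h \<noteq> id \<longrightarrow> (\<forall>x \<in> F. h x \<noteq> x))"
proof -
  let ?N = "8*g+8" and ?m = "4*g+5"
  have aa': "A \<circ> A = id" unfolding A_def by (rule aa[OF bij])
  have bN': "B ^^ ?N = id" unfolding B_def by (rule b2k[OF bij])
  have ab': "A \<circ> B = B ^^ ?m \<circ> A" unfolding A_def B_def by (rule ab[OF bij])
  have Np: "?N > 0" by simp
  note mf = mult_form[OF aa' bN' ab' Np]
  note inv1 = inv_form(1)[OF aa' bN' ab' Np]
  note inv2 = inv_form(2)[OF aa' bN' ab' Np]
  note amod = a_mod[OF aa' bN' ab' Np]
  note bmod = b_mod[OF aa' bN' ab' Np]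
  have Ap: "A permutes F" unfolding A_def by (rule a_perm[OF bij])
  have Bp: "B permutes F" unfolding B_def by (rule b_perm[OF bij])
  have G1eq: "G1 c (4*g+4) = {B ^^ j \<circ> A ^^ i | j i. True}"
  proof (intro equalityI subsetI)
    fix x assume "x \<in> G1 c (4*g+4)" then show "x \<in> {B ^^ j \<circ> A ^^ i | j i. True}"
      unfolding G1_def A_def B_def by blast
  next
    fix x assume "x \<in> {B ^^ j \<circ> A ^^ i | j i. True}"
    then obtain j i where x: "x = B ^^ j \<circ> A ^^ i" by blast
    then have "x = B ^^ (j mod ?N) \<circ> A ^^ (i mod 2)" using amod bmod by metis
    moreover have "j mod ?N \<le> 2*(4*g+4) - 1" by (rule le_help) simp
    moreover have "i mod 2 \<le> 1" by simp
    ultimately show "x \<in> G1 c (4*g+4)" unfolding G1_def A_def B_def by blast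
  qed
  have G1eq2: "G1 c (4*g+4) = (\<lambda>(j,i). B ^^ j \<circ> A ^^ i) ` ({..<?N} \<times> {..<2})"
  proof (intro equalityI subsetI)
    fix x assume "x \<in> G1 c (4*g+4)"
    then obtain j i where x: "x = B ^^ j \<circ> A ^^ i" "j \<le> 2*(4*g+4)-1" "i \<le> 1"
      unfolding G1_def A_def B_def by blast
    have "j < ?N" using x(2) by (rule le_help2)
    moreover have "i < 2" using x(3) by simp
    ultimately have "(j,i) \<in> {..<?N} \<times> {..<2}" by simp
    then show "x \<in> (\<lambda>(j,i). B ^^ j \<circ> A ^^ i) ` ({..<?N} \<times> {..<2})"
      using x(1) by (auto intro!: rev_image_eqI[of "(j,i)"])
  next
    fix x assume "x \<in> (\<lambda>(j,i). B ^^ j \<circ> A ^^ i) ` ({..<?N} \<times> {..<2})"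
    then obtain j i where x: "x = B ^^ j \<circ> A ^^ i" "j < ?N" "i < 2" by auto
    have "j \<le> 2*(4*g+4)-1" using x(2) by (rule le_help)
    moreover have "i \<le> 1" using x(3) by simp
    ultimately show "x \<in> G1 c (4*g+4)" using x(1) unfolding G1_def A_def B_def by blast
  qed
  have c0: "c (e1 g 0) \<in> F" using F_eq[OF bij] e1_lt'[OF bij, of 0] by auto
  have ev0: "(B ^^ j \<circ> A ^^ 0) (c (e1 g 0)) = c (e1 g j)" if "j < ?N" for j
    using bpow1[OF bij, of 0 j] that unfolding B_def by simp
  have ev1: "(B ^^ j \<circ> A ^^ 1) (c (e1 g 0)) = c (e2 g j)" if "j < ?N" for j
  proof -
    have "A (c (e1 g 0)) = c (e2 g 0)" using a1[OF bij, of 0] unfolding A_def by (simp add: tau_def)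
    then show ?thesis using bpow2[OF bij, of 0 j] that unfolding B_def by simp
  qed
  have subg: "subgroup (G1 c (4*g+4)) (perm_group F)"
  proof (rule subgroup.intro)
    show "G1 c (4*g+4) \<subseteq> carrier (perm_group F)"
      unfolding G1eq perm_group_def
      using permutes_compose[OF permutes_funpow[OF Ap] permutes_funpow[OF Bp]] by auto
  next
    fix x y assume "x \<in> G1 c (4*g+4)" "y \<in> G1 c (4*g+4)"
    then obtain j i j' i' where xy: "x = B ^^ j \<circ> A ^^ i" "y = B ^^ j' \<circ> A ^^ i'" unfolding G1eq by blast
    then have "x \<otimes>\<^bsub>perm_group F\<^esub> y = B ^^ (j + ?m^i * j') \<circ> A ^^ (i + i')"
      using mf by (simp add: perm_group_def)
    then show "x \<otimes>\<^bsub>perm_group F\<^esub> y \<in> G1 c (4*g+4)" unfolding G1eq by blast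
  next
    have "id = B ^^ 0 \<circ> A ^^ 0" by simp
    then show "\<one>\<^bsub>perm_group F\<^esub> \<in> G1 c (4*g+4)" unfolding G1eq perm_group_def by (simp only: monoid.simps) blast
  next
    fix x assume "x \<in> G1 c (4*g+4)"
    then obtain j i where x: "x = B ^^ j \<circ> A ^^ i" unfolding G1eq by blast
    define h where "h = B ^^ (?m^i * ((?N-1)*j)) \<circ> A ^^ i"
    have h1: "x \<circ> h = id" and h2: "h \<circ> x = id" unfolding x h_def using inv1 inv2 by auto
    have hp: "h permutes F" unfolding h_def
      using permutes_compose[OF permutes_funpow[OF Ap] permutes_funpow[OF Bp]] by auto
    have "inv\<^bsub>perm_group F\<^esub> x = h"
      unfolding m_inv_def perm_group_def
    proof (simp, rule the_equality)
      show "h permutes F \<and> x \<circ> h = id \<and> h \<circ> x = id" using hp h1 h2 by simp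
    next
      fix y assume "y permutes F \<and> x \<circ> y = id \<and> y \<circ> x = id"
      then have "y \<circ> x = id" "x \<circ> h = id" using h1 by auto
      then show "y = h" by (metis comp_id id_comp o_assoc)
    qed
    then show "inv\<^bsub>perm_group F\<^esub> x \<in> G1 c (4*g+4)" unfolding G1eq h_def by auto
  qed
  have inj: "inj_on (\<lambda>(j,i). B ^^ j \<circ> A ^^ i) ({..<?N} \<times> {..<2})"
  proof (rule inj_onI, clarify)
    fix j i j' i' assume j: "j < ?N" "j' < ?N" and i: "i < (2::nat)" "i' < 2"
      and eq: "B ^^ j \<circ> A ^^ i = B ^^ j' \<circ> A ^^ i'"
    have ci: "\<And>x y. x < 16*g+16 \<Longrightarrow> y < 16*g+16 \<Longrightarrow> c x = c y \<longleftrightarrow> x = y" using c_eq[OF bij] .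
    have i01: "i = 0 \<or> i = 1" "i' = 0 \<or> i' = 1" using i by auto
    have v: "(B ^^ j \<circ> A ^^ i) (c (e1 g 0)) = (B ^^ j' \<circ> A ^^ i') (c (e1 g 0))" using eq by simp
    show "j = j' \<and> i = i'"
      using i01 v ev0 ev1 j ci e1_lt'[OF bij] e2_lt'[OF bij] e1_inj[of j g j'] e2_inj[of j g j'] e12_disj'[OF bij]
      by (elim disjE) (simp_all, metis+)
  qed
  have card: "card (G1 c (4*g+4)) = 16*g+16"
    unfolding G1eq2 using card_image[OF inj] by simp
  have ffree: "\<forall>h \<in> G1 c (4*g+4). h \<noteq> id \<longrightarrow> (\<forall>x \<in> F. h x \<noteq> x)"
  proof (intro ballI impI)
    fix h x assume h: "h \<in> G1 c (4*g+4)" and hid: "h \<noteq> id" and x: "x \<in> F"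
    obtain j i where hj: "h = B ^^ j \<circ> A ^^ i" "j < ?N" "i < 2" using h unfolding G1eq2 by auto
    have ci: "\<And>x y. x < 16*g+16 \<Longrightarrow> y < 16*g+16 \<Longrightarrow> c x = c y \<longleftrightarrow> x = y" using c_eq[OF bij] .
    show "h x \<noteq> x"
    proof (cases "i = 0")
      case True
      then have j0: "j \<noteq> 0" using hid hj by auto
      show ?thesis
      proof (rule F_cases[OF bij x])
        fix p assume 1: "p < ?N" "x = c (e1 g p)"
        have "h x = c (e1 g ((p+j) mod ?N))" using 1 True hj bpow1[OF bij] unfolding B_def by simp
        moreover have "e1 g ((p+j) mod ?N) \<noteq> e1 g p" using e1_inj[of "(p+j) mod ?N" g p] mod_ne[of p ?N j] 1 hj j0 by auto
        ultimately show ?thesis using 1 ci e1_lt'[OF bij] by simp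
      next
        fix p assume 2: "p < ?N" "x = c (e2 g p)"
        have "h x = c (e2 g ((p+j) mod ?N))" using 2 True hj bpow2[OF bij] unfolding B_def by simp
        moreover have "e2 g ((p+j) mod ?N) \<noteq> e2 g p" using e2_inj[of "(p+j) mod ?N" g p] mod_ne[of p ?N j] 2 hj j0 by auto
        ultimately show ?thesis using 2 ci e2_lt'[OF bij] by simp
      qed
    next
      case False
      then have i1: "i = 1" using hj by auto
      show ?thesis
      proof (rule F_cases[OF bij x])
        fix p assume 1: "p < ?N" "x = c (e1 g p)"
        have "h x = c (e2 g ((tau g p + j) mod ?N))"
          using 1 i1 hj bpow2[OF bij] a1[OF bij] tau_lt'[OF bij] unfolding A_def B_def by simp
        moreover have "e2 g ((tau g p + j) mod ?N) \<noteq> e1 g p"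
        proof -
          have "(tau g p + j) mod ?N < ?N" by simp
          then have "e1 g p \<noteq> e2 g ((tau g p + j) mod ?N)" by (rule e12_disj'[OF bij 1(1)])
          then show ?thesis by metis
        qed
        ultimately show ?thesis using 1 ci e1_lt'[OF bij] e2_lt'[OF bij] by simp
      next
        fix p assume 2: "p < ?N" "x = c (e2 g p)"
        have "h x = c (e1 g ((tau g p + j) mod ?N))"
          using 2 i1 hj bpow1[OF bij] a2[OF bij] tau_lt'[OF bij] unfolding A_def B_def by simp
        moreover have "e1 g ((tau g p + j) mod ?N) \<noteq> e2 g p"
        proof -
          have "(tau g p + j) mod ?N < ?N" by simp
          then show ?thesis by (rule e12_disj'[OF bij _ 2(1)])
        qed
        ultimately show ?thesis using 2 ci e1_lt'[OF bij] e2_lt'[OF bij] by simp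
      qed
    qed
  qed
  show ?thesis using subg card ffree by blast
qed

theorem theorem3p1:
  fixes l :: nat and k q :: nat and F :: "'a set" and c :: "nat \<Rightarrow> 'a"
  assumes "l \<ge> 2" and "k = 2 ^ l" and "q = 4 * k"
    and "bij_betw c {0..<q} F"
  shows "subgroup (G1 c k) (perm_group F)
    \<and> card (G1 c k) = q
    \<and> (\<forall>g \<in> G1 c k. g \<noteq> id \<longrightarrow> (\<forall>x \<in> F. g x \<noteq> x))"
proof -
  obtain t where t: "l = 2 + t" using le_Suc_ex[OF assms(1)] by blast
  define g where "g = 2 ^ t - (1::nat)"
  have pos: "(2::nat) ^ t \<ge> 1" by simp
  have "k = 4 * 2^t" using assms(2) t by (simp add: power_add)
  then have kg: "k = 4*g+4" using pos unfolding g_def by arith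
  have qg: "q = 16*g+16" using kg assms(3) by simp
  show ?thesis using main_g[of c g F] assms(4) unfolding kg qg by simp
qed

end
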